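(* Let $\mu>1$ be a real number and $N\ge 1$ an integer. Let $a(1),a(2),\dots$ be a sequence of real numbers such that $a(n+m)\le a(n)+a(m)$ holds for all integers $n,m$ with $N\le n\le m\le \mu n$. Then $\lim_{n\to\infty} a(n)/n$ exists (possibly $-\infty$) and equals $\inf_{k\ge N} a(k)/k$. *)

theory Defs
  imports Complex_Main "HOL-Library.Extended_Real"
begin

end

theory Submission
  imports Defs
begin

lemma cover:
  fixes P n :: nat assumes P0: "P > 0" and "n > P"
  shows "\<exists>t. P*2^t < n \<and> n \<le> P*2^(Suc t)"
  using assms(2)
proof (induction n rule: less_induct)
  case (less n)
  show ?case
  proof (cases "n \<le> 2*P")
    case True thus ?thesis using less.prems by (intro exI[of _ 0]) simp
  next
    case False
    define n' where "n' = (n+1) div 2"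
    have "n' < n" "P < n'" using False P0 unfolding n'_def by auto
    then obtain t where t1: "P*2^t < n'" and t2: "n' \<le> P*2^Suc t" using less.IH by blast
    define x where "x = P*2^t"
    have x1: "P*2^Suc t = 2*x" and x2: "P*2^Suc (Suc t) = 4*x" unfolding x_def by simp_all
    have "x < (n+1) div 2" "(n+1) div 2 \<le> 2*x" using t1 t2 x1 unfolding x_def n'_def by auto
    hence "2*x < n" "n \<le> 4*x" by auto
    thus ?thesis using x1 x2 by (intro exI[of _ "Suc t"]) simp
  qed
qed

locale rsub =
  fixes a :: "nat \<Rightarrow> real" and \<mu> :: real and N :: nat
  assumes mu: "\<mu> > 1" and N1: "N \<ge> 1"
    and sub: "\<And>n m. N \<le> n \<Longrightarrow> n \<le> m \<Longrightarrow> real m \<le> \<mu> * real n \<Longrightarrow>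
           a (n + m) \<le> a n + a m"
begin

lemma double: "N \<le> k \<Longrightarrow> a (2^t * k) \<le> 2^t * a k"
proof (induction t)
  case 0 thus ?case by simp
next
  case (Suc t)
  have "k \<le> 2^t*k" by simp
  hence "N \<le> 2^t*k" using Suc.prems by linarith
  moreover have "1 * real (2^t*k) \<le> \<mu> * real (2^t*k)" using mu by (intro mult_right_mono) auto
  ultimately have "a (2^t*k + 2^t*k) \<le> a (2^t*k) + a (2^t*k)" by (intro sub) auto
  hence h: "a (2^t*k + 2^t*k) \<le> 2 * a (2^t*k)" by simp
  have i: "a (2^t*k) \<le> 2^t * a k" by (rule Suc.IH[OF Suc.prems])
  have eq: "2^Suc t * k = 2^t*k + 2^t*k" by simp
  have "a (2^Suc t * k) = a (2^t*k + 2^t*k)" by (simp only: eq)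
  moreover have "(2::real)^Suc t * a k = 2 * (2^t * a k)" by simp
  ultimately show ?case using h i by linarith
qed

lemma bounded: "\<exists>S M. \<forall>n\<ge>M. a n \<le> S * real n"
proof -
  define M0 where "M0 = max N (nat \<lceil>1/(\<mu>-1)\<rceil>)"
  define S where "S = Max ((\<lambda>j. a j / real j) ` {M0..2*M0})"
  have M0N: "N \<le> M0" unfolding M0_def by simp
  have M0mu: "1/(\<mu>-1) \<le> real M0"
  proof -
    have "1/(\<mu>-1) \<le> real (nat \<lceil>1/(\<mu>-1)\<rceil>)" by linarith
    moreover have "nat \<lceil>1/(\<mu>-1)\<rceil> \<le> M0" unfolding M0_def by simp
    ultimately show ?thesis by (meson of_nat_le_iff order_trans)
  qed
  have "\<forall>n\<ge>M0. a n \<le> S * real n"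
  proof (intro allI impI)
    fix n assume "M0 \<le> n"
    thus "a n \<le> S * real n"
    proof (induction n rule: less_induct)
      case (less n)
      have npos: "real n > 0" using less.prems M0N N1 by simp
      show ?case
      proof (cases "n \<le> 2*M0")
        case True
        hence "a n / real n \<le> S" unfolding S_def using less.prems by (intro Max_ge) auto
        thus ?thesis using npos by (simp add: divide_le_eq)
      next
        case False
        define m where "m = n div 2"
        define r where "r = n - m"
        have mM: "M0 \<le> m" using False unfolding m_def by simp
        have rm: "r = m \<or> r = m + 1" unfolding r_def m_def by presburger
        have rn: "r < n" "m < n" using mM M0N N1 unfolding r_def m_def by auto
        have nmr: "n = m + r" unfolding r_def m_def by simp
        have "1/(\<mu>-1) \<le> real m" using M0mu mM by (meson of_nat_le_iff order_trans)
        hence "1 \<le> (\<mu>-1) * real m" using mu by (simp add: divide_le_eq mult.commute)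
        hence "real r \<le> \<mu> * real m" using rm by (auto simp: algebra_simps)
        moreover have "m \<le> r" using rm by auto
        ultimately have "a (m + r) \<le> a m + a r" using mM M0N by (intro sub) auto
        moreover have "a m \<le> S * real m" using less.IH rn mM by auto
        moreover have "a r \<le> S * real r"
        proof -
          have "M0 \<le> r" using rm mM by auto
          thus ?thesis using less.IH[OF rn(1)] by blast
        qed
        ultimately show ?thesis using nmr by (simp add: algebra_simps)
      qed
    qed
  qed
  thus ?thesis by blast
qed

lemma aux_pow:
  fixes T A :: real assumes "1 \<le> A" "A < 2" "T \<ge> 2/(2-A)"
  shows "T*A^j + (2^(j+1) - 2) \<le> T*2^j"
proof (induction j)
  case 0 thus ?case by simp
next
  case (Suc j)
  have h1: "(2-A)*T \<ge> 2" using assms by (simp add: pos_divide_le_eq mult.commute)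
  have h2: "A^j \<ge> 1" using assms by simp
  have h3: "(2-A)*T*A^j \<ge> (2-A)*T" using h1 h2 mult_left_mono[OF h2, of "(2-A)*T"] by simp
  have e: "T*A^Suc j = 2*(T*A^j) - (2-A)*T*A^j" by (simp add: algebra_simps)
  have e2: "(2::real)^(Suc j + 1) = 2 * 2^(j+1)" by simp
  have e3: "T*2^Suc j = 2*(T*2^j)" by simp
  show ?case unfolding e e2 e3 using Suc.IH h1 h3 by linarith
qed

lemma reach:
  assumes VX: "\<And>x. x \<ge> X \<Longrightarrow> a x \<le> V * real x"
  and T1: "real T \<ge> \<mu> * real X" and T2: "real T \<ge> \<mu> * real N"
  and T3: "real T \<ge> 4/(2 - (1+1/\<mu>))"
  shows "real T*(1+1/\<mu>)^j + (2^(j+1) - 2) \<le> real n \<Longrightarrow> real n \<le> real T*2^j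
     \<Longrightarrow> a n \<le> a T + (real n - real T) * V"
proof (induction j arbitrary: n)
  case 0
  hence "n = T" by simp
  thus ?case by simp
next
  case (Suc j n)
  define A where "A = 1 + 1/\<mu>"
  have A1: "1 < A" using mu unfolding A_def by simp
  have A2: "A < 2" using mu unfolding A_def by simp
  have Tpos: "real T \<ge> 0" by simp
  have T3': "real T * (2 - A) \<ge> 4" using T3 A2 unfolding A_def by (simp add: pos_divide_le_eq)
  have T3'': "real T \<ge> 2/(2-A)"
  proof -
    have "2/(2-A) \<le> 4/(2-A)" using A2 by (simp add: divide_right_mono)
    thus ?thesis using T3 unfolding A_def by linarith
  qed
  define e where "e = (\<lambda>i::nat. (2::real)^(i+1) - 2)"
  have e_nonneg: "e i \<ge> 0" for i
  proof -
    have "(1::real) \<le> 2^i" by simp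
    thus ?thesis unfolding e_def by simp
  qed
  have eS: "e (Suc j) = 2 * e j + 2" unfolding e_def by simp
  have nlo: "real T * A^Suc j + e (Suc j) \<le> real n" using Suc.prems unfolding A_def e_def by simp
  have nhi: "real n \<le> 2 * (real T * 2^j)" using Suc.prems by simp
  have Apow1: "A^j \<ge> 1" by (rule one_le_power) (use A1 in linarith)
  have Apow2: "A^Suc j \<ge> 1" by (rule one_le_power) (use A1 in linarith)
  note Apow = Apow1 Apow2
  have "real T \<le> real T * A^Suc j" using Apow Tpos by (simp add: mult_le_cancel_left1)
  hence nT: "real T \<le> real n" using nlo e_nonneg[of "Suc j"] by linarith
  define lo where "lo = max (real n / 2) (real T * A^j + e j)"
  define c where "c = nat \<lceil>lo\<rceil>"
  have lo0: "lo \<ge> 0" unfolding lo_def by simp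
  have cc: "real c = of_int \<lceil>lo\<rceil>" unfolding c_def using lo0 by simp
  have c1: "real c \<ge> lo" using cc ceiling_correct[of lo] by linarith
  have c2: "real c < lo + 1" using cc ceiling_correct[of lo] by linarith
  have auxp: "real T*A^j + e j \<le> real T*2^j" using aux_pow[OF _ A2 T3'', of j] A1 unfolding e_def by simp
  have "lo \<le> real (T*2^j)" unfolding lo_def using auxp nhi by simp
  hence "real c < real (T*2^j) + 1" using c2 by linarith
  hence "real c < real (T*2^j + 1)" by simp
  hence "c < T*2^j + 1" by (simp only: of_nat_less_iff)
  hence "c \<le> T*2^j" by simp
  hence "real c \<le> real (T*2^j)" by (simp only: of_nat_le_iff)
  hence chi: "real c \<le> real T * 2^j" by simp
  have clo: "real T * A^j + e j \<le> real c" using c1 unfolding lo_def by simp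
  have chalf: "real n / 2 \<le> real c" using c1 unfolding lo_def by simp
  have b1: "(real n / 2 + 1) * A \<le> real n"
  proof -
    have "real T * (2 - A) \<le> real n * (2 - A)" using nT A2 by (intro mult_right_mono) auto
    hence "real n * (2 - A) \<ge> 4" using T3' by linarith
    thus ?thesis using A2 by (simp add: algebra_simps)
  qed
  have b2: "(real T * A^j + e j + 1) * A \<le> real n"
  proof -
    have "(e j + 1) * A \<le> (e j + 1) * 2" using A2 e_nonneg[of j] by (intro mult_left_mono) auto
    moreover have "real T * A^j * A = real T * A^Suc j" by (simp add: algebra_simps)
    ultimately show ?thesis using nlo eS by (simp add: algebra_simps)
  qed
  have "(lo + 1) * A \<le> real n" unfolding lo_def using b1 b2 by (simp add: max_def)
  moreover have "real c * A < (lo + 1) * A" using c2 A1 by simp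
  ultimately have cA: "real c * A \<le> real n" by linarith
  moreover have "real c * 1 \<le> real c * A" using A1 by (intro mult_left_mono) auto
  ultimately have cn: "real c \<le> real n" by linarith
  hence cn': "c \<le> n" by simp
  define d where "d = n - c"
  have dr: "real d = real n - real c" unfolding d_def using cn' by simp
  have dc: "d \<le> c" using chalf dr by simp
  have "real c + real c / \<mu> \<le> real n" using cA unfolding A_def by (simp add: algebra_simps)
  hence "real c + \<mu> * real c \<le> \<mu> * real n" using mu by (simp add: field_simps)
  moreover have "\<mu> * real d = \<mu> * real n - \<mu> * real c" unfolding dr by (simp add: right_diff_distrib)
  ultimately have cmu: "real c \<le> \<mu> * real d" by linarith
  have "real T * 1 \<le> real T * A^j" using Apow(1) by (intro mult_left_mono) auto
  hence cT: "real T \<le> real c" using clo e_nonneg[of j] by linarith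
  have "\<mu> * real X \<le> \<mu> * real d" using T1 cT cmu by linarith
  hence dX: "X \<le> d" using mu by simp
  have "\<mu> * real N \<le> \<mu> * real d" using T2 cT cmu by linarith
  hence dN: "N \<le> d" using mu by simp
  have dcn: "d + c = n" unfolding d_def using cn' by simp
  have "a (d + c) \<le> a d + a c" using sub[OF dN dc cmu] .
  hence s1: "a n \<le> a d + a c" unfolding dcn .
  have s2: "a c \<le> a T + (real c - real T) * V"
    using Suc.IH[of c] clo chi unfolding A_def e_def by simp
  have s3: "a d \<le> V * real d" using VX dX by simp
  have s4: "V * real d = V * real n - V * real c" unfolding dr by (simp add: right_diff_distrib)
  have s5: "(real c - real T) * V = V * real c - V * real T" by (simp add: algebra_simps)
  have s6: "(real n - real T) * V = V * real n - V * real T" by (simp add: algebra_simps)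
  show ?case using s1 s2 s3 s4 s5 s6 by linarith
qed


lemma getJ: "\<exists>J1. 4*(1+1/\<mu>)^(Suc J1) \<le> 2^(Suc J1)"
proof -
  define A where "A = 1 + 1/\<mu>"
  have A1: "1 < A" using mu unfolding A_def by simp
  have A2: "A < 2" using mu unfolding A_def by simp
  obtain m where m: "(A/2)^m < 1/4" using real_arch_pow_inv[of "1/4" "A/2"] A2 by auto
  have "(A/2)^Suc m \<le> (A/2)^m" using A1 A2 by (intro power_decreasing) auto
  hence "(A/2)^Suc m < 1/4" using m by linarith
  hence "A^Suc m / 2^Suc m < 1/4" by (simp only: power_divide)
  hence "4*A^Suc m < 2^Suc m" by (simp add: divide_less_eq)
  hence "4*A^Suc m \<le> 2^Suc m" by simp
  thus ?thesis unfolding A_def by blast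
qed

lemma step:
  assumes k: "N \<le> k" and Vc: "a k / real k \<le> V" and VX: "\<forall>x\<ge>X. a x \<le> V * real x"
  and J: "4*(1+1/\<mu>)^(Suc J1) \<le> 2^(Suc J1)"
  shows "\<exists>X'. \<forall>n\<ge>X'. a n \<le> (V - (V - a k/real k)/2^(Suc J1)) * real n"
proof -
  define A where "A = 1 + 1/\<mu>"
  have A1: "1 < A" using mu unfolding A_def by simp
  have A2: "A < 2" using mu unfolding A_def by simp
  define cc where "cc = a k / real k"
  have kpos: "real k > 0" using k N1 by simp
  define P where "P = 2^J1 * k"
  have Ppos: "P > 0" using kpos by (simp add: P_def)
  define T0 where "T0 = \<mu>*real X + \<mu>*real N + 4/(2-A) + 8"
  have q1: "\<mu>*real X \<ge> 0" "\<mu>*real N \<ge> 0" "4/(2-A) \<ge> 0" using mu A2 by auto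
  define X' where "X' = max (P+1) (nat \<lceil>2^Suc J1 * T0\<rceil>)"
  show ?thesis
  proof (intro exI allI impI)
    fix n assume nX: "X' \<le> n"
    hence nP: "P < n" unfolding X'_def by simp
    have "nat \<lceil>2^Suc J1 * T0\<rceil> \<le> n" using nX unfolding X'_def by simp
    hence nT0: "2^Suc J1 * T0 \<le> real n" by linarith
    obtain t where t1: "P*2^t < n" and t2: "n \<le> P*2^Suc t" using cover[OF Ppos nP] by blast
    define T where "T = 2^t * k"
    have PT1: "P*2^t = 2^J1 * T" unfolding P_def T_def by (simp add: mult_ac)
    have PT2: "P*2^Suc t = 2^Suc J1 * T" unfolding P_def T_def by (simp add: mult_ac)
    have "n \<le> 2^Suc J1 * T" using t2 PT2 by simp
    hence "real n \<le> real (2^Suc J1 * T)" by (simp only: of_nat_le_iff)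
    hence nle: "real n \<le> 2^Suc J1 * real T" by simp
    have "2^J1 * T < n" using t1 PT1 by simp
    hence "real (2^J1 * T) < real n" by (simp only: of_nat_less_iff)
    hence ngt: "2^J1 * real T < real n" by simp
    have "2^Suc J1 * T0 \<le> 2^Suc J1 * real T" using nT0 nle by linarith
    hence TT0: "T0 \<le> real T" by simp
    have T1: "real T \<ge> \<mu> * real X" and T2: "real T \<ge> \<mu> * real N"
      and T3: "real T \<ge> 4/(2 - (1+1/\<mu>))" and T8: "real T \<ge> 8"
      using TT0 q1 unfolding T0_def A_def by linarith+
    have h1: "real T * (4*A^Suc J1) \<le> real T * 2^Suc J1" using J unfolding A_def
      by (intro mult_left_mono) auto
    hence h1': "4*(real T * A^Suc J1) \<le> 2*(real T * 2^J1)" by (simp add: algebra_simps)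
    have h2: "8 * (2::real)^J1 \<le> real T * 2^J1" using T8 by (intro mult_right_mono) auto
    have e1: "(2::real)^(Suc J1 + 1) = 4 * 2^J1" by simp
    have lo: "real T*(1+1/\<mu>)^(Suc J1) + (2^(Suc J1+1) - 2) \<le> real n"
    proof -
      have "2^J1 * real T = real T * 2^J1" by simp
      thus ?thesis using h1' h2 ngt unfolding e1 A_def[symmetric] by linarith
    qed
    have hi: "real n \<le> real T*2^(Suc J1)" using nle by (simp add: mult.commute)
    have an: "a n \<le> a T + (real n - real T) * V"
      using reach[of X V T "Suc J1" n] VX T1 T2 T3 lo hi by auto
    have "a T \<le> 2^t * a k" unfolding T_def by (rule double[OF k])
    also have "2^t * a k = real T * cc" unfolding T_def cc_def using kpos by simp
    finally have aT: "a T \<le> real T * cc" .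
    have Vc': "V - cc \<ge> 0" using Vc unfolding cc_def by simp
    have "real n / 2^Suc J1 \<le> real T" using nle by (simp add: divide_le_eq mult.commute)
    hence h3: "real n / 2^Suc J1 * (V - cc) \<le> real T * (V - cc)" using Vc' by (intro mult_right_mono)
    have "(V - (V - cc)/2^(Suc J1)) * real n = V * real n - real n / 2^Suc J1 * (V - cc)"
      by (simp add: algebra_simps)
    moreover have "(real n - real T) * V = V * real n - real T * V" by (simp add: algebra_simps)
    moreover have "real T * (V - cc) = real T * V - real T * cc" by (simp add: algebra_simps)
    ultimately show "a n \<le> (V - (V - a k/real k)/2^(Suc J1)) * real n"
      using an aT h3 unfolding cc_def by linarith
  qed
qed

lemma core:
  assumes k: "N \<le> k" and eps: "\<epsilon> > 0"
  shows "\<exists>M. \<forall>n\<ge>M. a n / real n \<le> a k / real k + \<epsilon>"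
proof -
  obtain S M where SM: "\<forall>n\<ge>M. a n \<le> S * real n" using bounded by blast
  obtain J1 where J: "4*(1+1/\<mu>)^(Suc J1) \<le> 2^(Suc J1)" using getJ by blast
  define cc where "cc = a k / real k"
  define S' where "S' = max S cc"
  define \<beta> :: real where "\<beta> = 1/2^Suc J1"
  have "(1::real) < 2^Suc J1" by (rule one_less_power) auto
  hence b0: "0 < \<beta>" "\<beta> < 1" unfolding \<beta>_def by auto
  have Sc: "S' - cc \<ge> 0" unfolding S'_def by simp
  have claim: "\<exists>X. \<forall>x\<ge>X. a x \<le> (cc + (1-\<beta>)^i*(S'-cc)) * real x" for i
  proof (induction i)
    case 0
    have "\<forall>x\<ge>M. a x \<le> (cc + (1-\<beta>)^0*(S'-cc)) * real x"
    proof (intro allI impI)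
      fix x assume "M \<le> x"
      hence "a x \<le> S * real x" using SM by simp
      also have "\<dots> \<le> S' * real x" unfolding S'_def by (intro mult_right_mono) auto
      finally show "a x \<le> (cc + (1-\<beta>)^0*(S'-cc)) * real x" by simp
    qed
    thus ?case by blast
  next
    case (Suc i)
    then obtain X where X: "\<forall>x\<ge>X. a x \<le> (cc + (1-\<beta>)^i*(S'-cc)) * real x" by blast
    define V where "V = cc + (1-\<beta>)^i*(S'-cc)"
    have "(1-\<beta>)^i*(S'-cc) \<ge> 0" using b0 Sc by simp
    hence Vc: "a k / real k \<le> V" unfolding V_def cc_def by simp
    obtain X' where X': "\<forall>n\<ge>X'. a n \<le> (V - (V - a k/real k)/2^(Suc J1)) * real n"
      using step[OF k Vc _ J, of X] X unfolding V_def by blast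
    have "V - (V - a k/real k)/2^(Suc J1) = cc + (1-\<beta>)^Suc i*(S'-cc)"
      unfolding V_def cc_def \<beta>_def by (simp add: algebra_simps)
    thus ?case using X' by auto
  qed
  have "\<exists>i. (1-\<beta>)^i*(S'-cc) < \<epsilon>"
  proof (cases "S' - cc = 0")
    case True thus ?thesis using eps by simp
  next
    case False
    hence pos: "S' - cc > 0" using Sc by simp
    obtain i where "(1-\<beta>)^i < \<epsilon>/(S'-cc)" using real_arch_pow_inv[of "\<epsilon>/(S'-cc)" "1-\<beta>"] b0 eps pos by auto
    hence "(1-\<beta>)^i*(S'-cc) < \<epsilon>" using pos by (simp add: less_divide_eq)
    thus ?thesis by blast
  qed
  then obtain i where i: "(1-\<beta>)^i*(S'-cc) < \<epsilon>" by blast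
  obtain X where X: "\<forall>x\<ge>X. a x \<le> (cc + (1-\<beta>)^i*(S'-cc)) * real x" using claim by blast
  show ?thesis
  proof (intro exI allI impI)
    fix n assume "max X 1 \<le> n"
    hence nX: "X \<le> n" and npos: "real n > 0" by auto
    have "a n / real n \<le> cc + (1-\<beta>)^i*(S'-cc)" using X nX npos by (simp add: divide_le_eq)
    thus "a n / real n \<le> a k / real k + \<epsilon>" using i unfolding cc_def by linarith
  qed
qed

end

lemma half_lem: "x \<le> y + (r - y)/2 \<Longrightarrow> y < r \<Longrightarrow> x < (r::real)"
  by (simp add: field_simps)

theorem theorem3p2:
  fixes a :: "nat \<Rightarrow> real" and \<mu> :: real and N :: nat
  assumes "\<mu> > 1" and "N \<ge> 1"
    and "\<And>n m. N \<le> n \<Longrightarrow> n \<le> m \<Longrightarrow> real m \<le> \<mu> * real n \<Longrightarrow>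
           a (n + m) \<le> a n + a m"
  shows "((\<lambda>n. ereal (a n / real n)) \<longlongrightarrow> (INF k\<in>{N..}. ereal (a k / real k))) sequentially"
proof -
  interpret rsub a \<mu> N using assms by unfold_locales auto
  show ?thesis
  proof (rule order_tendstoI)
    fix l assume l: "l < (INF k\<in>{N..}. ereal (a k / real k))"
    have "\<forall>n\<ge>N. l < ereal (a n / real n)"
    proof (intro allI impI)
      fix n assume "N \<le> n"
      hence "(INF k\<in>{N..}. ereal (a k / real k)) \<le> ereal (a n / real n)" by (intro INF_lower) auto
      thus "l < ereal (a n / real n)" using l by simp
    qed
    thus "eventually (\<lambda>n. l < ereal (a n / real n)) sequentially"
      unfolding eventually_sequentially by blast
  next
    fix u assume "(INF k\<in>{N..}. ereal (a k / real k)) < u"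
    then obtain k where k: "N \<le> k" "ereal (a k / real k) < u" by (auto simp: INF_less_iff)
    show "eventually (\<lambda>n. ereal (a n / real n) < u) sequentially"
    proof (cases u)
      case (real r)
      with k have kr: "a k / real k < r" by simp
      define \<epsilon> where "\<epsilon> = (r - a k / real k)/2"
      have "\<epsilon> > 0" using kr unfolding \<epsilon>_def by simp
      then obtain M where M: "\<forall>n\<ge>M. a n / real n \<le> a k / real k + \<epsilon>" using core[OF k(1)] by blast
      have "\<forall>n\<ge>M. ereal (a n / real n) < u"
      proof (intro allI impI)
        fix n assume "M \<le> n"
        hence "a n / real n \<le> a k / real k + \<epsilon>" using M by blast
        hence "a n / real n < r" using kr unfolding \<epsilon>_def by (rule half_lem)
        thus "ereal (a n / real n) < u" using real by simp
      qed
      thus ?thesis unfolding eventually_sequentially by blast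
    next
      case PInf thus ?thesis by simp
    next
      case MInf thus ?thesis using k by simp
    qed
  qed
qed

end
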